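(* Let $\sum_{k=1}^{\infty} a_k z^k$ be a power series (with $a_k \in \mathbb{C}$) that converges uniformly on the unit circle $\mathbb{T}$ to a continuous function $f$ such that $\lambda(\{z \in \mathbb{T} : \operatorname{Re} f(z) = 0\}) = 0$. Let $D = \{k \in \mathbb{N} : a_k \neq 0\}$. Then \[ \alpha(D) \leq \min(\rho_+(f), \rho_-(f)). \]
   Context: $\mathbb{N} = \{1,2,\ldots\}$; $\lambda$ is the normalized Lebesgue measure on $\mathbb{T} = \{z \in \mathbb{C} : |z| = 1\}$ with $\lambda(\mathbb{T}) = 1$. For continuous $f\colon \mathbb{T} \to \mathbb{C}$, $\rho_+(f) = \lambda(\{z \in \mathbb{T} : \operatorname{Re} f(z) > 0\})$ and $\rho_-(f) = \lambda(\{z \in \mathbb{T} : \operatorname{Re} f(z) < 0\})$. For a finite set $E \subset \mathbb{N}$ and $n \geq 1$, the circulant graph $G_n$ with set of distances $E$ has vertex set $\{0, \ldots, n-1\}$, vertices $u, v$ (possibly equal) being adjacent iff $u - v \equiv d$ or $v - u \equiv d \pmod n$ for some $d \in E$; $\alpha(G)$ is the maximum size of an independent set (no two adjacent vertices, no looped vertex); $\alpha(E) := \lim_{n\to\infty} \alpha(G_n)/n$ (which exists). For an arbitrary $D \subseteq \mathbb{N}$, $\alpha(D) := \inf_n \alpha(D \cap \{1, \ldots, n\})$. *)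

theory Defs
  imports "HOL-Analysis.Analysis"
begin

definition circ_measure :: "complex set \<Rightarrow> real" where
  "circ_measure S = measure lebesgue {t \<in> {0..1::real}. cis (2 * pi * t) \<in> S}"

definition rho_plus :: "(complex \<Rightarrow> complex) \<Rightarrow> real" where
  "rho_plus f = circ_measure {z \<in> sphere 0 1. Re (f z) > 0}"

definition rho_minus :: "(complex \<Rightarrow> complex) \<Rightarrow> real" where
  "rho_minus f = circ_measure {z \<in> sphere 0 1. Re (f z) < 0}"

text \<open>Adjacency in the circulant graph G_n on {0..n-1} with distance set E
  (loops allowed).\<close>
definition circ_adj :: "nat \<Rightarrow> nat set \<Rightarrow> nat \<Rightarrow> nat \<Rightarrow> bool" where
  "circ_adj n E u v \<longleftrightarrow> (\<exists>d\<in>E. (int u - int v) mod int n = int d mod int n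
                                 \<or> (int v - int u) mod int n = int d mod int n)"

definition circ_indep :: "nat \<Rightarrow> nat set \<Rightarrow> nat set \<Rightarrow> bool" where
  "circ_indep n E S \<longleftrightarrow> S \<subseteq> {..<n} \<and> (\<forall>u\<in>S. \<forall>v\<in>S. \<not> circ_adj n E u v)"

definition circ_alpha :: "nat \<Rightarrow> nat set \<Rightarrow> nat" where
  "circ_alpha n E = Max {card S | S. circ_indep n E S}"

definition alpha_fin :: "nat set \<Rightarrow> real" where
  "alpha_fin E = lim (\<lambda>n. real (circ_alpha n E) / real n)"

definition alpha_set :: "nat set \<Rightarrow> real" where
  "alpha_set D = (INF n\<in>{1..}. alpha_fin (D \<inter> {1..n}))"

end

theory Submission
  imports Defs "HOL-Analysis.Analysis"
begin

lemma homog_system_nontrivial: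
  fixes a :: "'r \<Rightarrow> 'j \<Rightarrow> 'a::field"
  assumes "finite R" "finite J" "card R < card J"
  shows "\<exists>b. (\<exists>j\<in>J. b j \<noteq> 0) \<and> (\<forall>r\<in>R. (\<Sum>j\<in>J. a r j * b j) = 0)"
  using assms
proof (induction R arbitrary: J a rule: finite_induct)
  case empty
  then obtain j0 where "j0 \<in> J" by fastforce
  then show ?case by (intro exI[of _ "\<lambda>j. if j = j0 then 1 else 0"]) auto
next
  case (insert r R)
  show ?case
  proof (cases "\<forall>j\<in>J. a r j = 0")
    case True
    from insert.IH[of J a] insert.prems insert.hyps obtain b where
      b: "(\<exists>j\<in>J. b j \<noteq> 0)" "(\<forall>r\<in>R. (\<Sum>j\<in>J. a r j * b j) = 0)" by auto
    then show ?thesis using True by (intro exI[of _ b]) auto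
  next
    case False
    then obtain j0 where j0: "j0 \<in> J" "a r j0 \<noteq> 0" by auto
    define a' where "a' = (\<lambda>r' j. a r' j - a r' j0 * a r j / a r j0)"
    have "card R < card (J - {j0})" using insert.prems insert.hyps j0 by auto
    from insert.IH[of "J - {j0}" a'] this insert.prems obtain b' where
      b': "(\<exists>j\<in>J-{j0}. b' j \<noteq> 0)" "(\<forall>r'\<in>R. (\<Sum>j\<in>J-{j0}. a' r' j * b' j) = 0)" by auto
    define b where "b = (\<lambda>j. if j = j0 then - (\<Sum>j\<in>J-{j0}. a r j * b' j) / a r j0 else b' j)"
    have spl: "(\<Sum>j\<in>J. a r' j * b j) = (\<Sum>j\<in>J-{j0}. a r' j * b' j) + a r' j0 * b j0" for r'
      using insert.prems j0 by (simp add: sum.remove[of J j0] b_def add.commute)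
    have "(\<Sum>j\<in>J. a r j * b j) = 0" using j0 by (simp only: spl) (simp add: b_def)
    moreover have "(\<Sum>j\<in>J. a r' j * b j) = 0" if "r' \<in> R" for r'
    proof -
      have "(\<Sum>j\<in>J-{j0}. a' r' j * b' j) = (\<Sum>j\<in>J-{j0}. a r' j * b' j) - a r' j0 / a r j0 * (\<Sum>j\<in>J-{j0}. a r j * b' j)"
        by (simp add: a'_def algebra_simps sum_subtractf sum_distrib_left)
      then show ?thesis using b'(2) that j0 by (simp only: spl) (simp add: b_def field_simps)
    qed
    moreover have "\<exists>j\<in>J. b j \<noteq> 0" using b'(1) by (auto simp: b_def)
    ultimately show ?thesis by auto
  qed
qed

definition ee :: "real \<Rightarrow> complex" where "ee x = cis (2 * pi * x)"

lemma ee_add: "ee (x + y) = ee x * ee y"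
  by (simp add: ee_def cis_mult distrib_left)

lemma ee_cnj: "cnj (ee x) = ee (- x)"
  by (simp add: ee_def cis_cnj)

lemma ee_int: "ee (of_int m) = 1"
  by (simp add: ee_def)

lemma ee_norm[simp]: "norm (ee x) = 1"
  by (simp add: ee_def)

lemma ee_pow: "ee x ^ k = ee (real k * x)"
  unfolding ee_def Complex.DeMoivre by (simp add: mult_ac)

lemma ortho:
  assumes "n \<ge> 1"
  shows "(\<Sum>j<n. ee (real j * of_int m / real n)) = (if int n dvd m then of_nat n else 0)"
proof -
  define z where "z = ee (of_int m / real n)"
  have zj: "ee (real j * of_int m / real n) = z ^ j" for j
    by (simp add: z_def ee_pow)
  have zn: "z ^ n = 1" using assms
    by (simp add: z_def ee_pow ee_int[of m, symmetric])
  show ?thesis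
  proof (cases "int n dvd m")
    case True
    then obtain q where "m = int n * q" by auto
    then have "z = 1" using assms by (simp add: z_def ee_int[of q, symmetric])
    then show ?thesis using True by (simp add: zj)
  next
    case False
    have "z \<noteq> 1"
    proof
      assume "z = 1"
      then have "cos (2 * pi * (of_int m / real n)) = 1"
        by (simp add: z_def ee_def complex_eq_iff)
      then obtain q :: int where q: "2 * pi * (of_int m / real n) = of_int q * 2 * pi"
        by (auto simp: cos_one_2pi_int)
      then have "of_int m = real n * of_int q" using assms by (simp add: field_simps)
      then have "m = int n * q" by (metis of_int_eq_iff of_int_mult of_int_of_nat_eq)
      then show False using False by auto
    qed
    then have "(\<Sum>j<n. z ^ j) = 0" using zn by (simp add: geometric_sum)
    then show ?thesis using False by (simp add: zj)
  qed
qed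

lemma cnj_P: "cnj (\<Sum>k\<in>E. c k * ee (x k)) = (\<Sum>k\<in>E. cnj (c k) * ee (- x k))"
  by (simp add: ee_cnj)

lemma inertia:
  fixes c :: "nat \<Rightarrow> complex"
  assumes n: "n \<ge> 1" and E: "finite E" and S: "circ_indep n E S"
  shows "card S + card {j\<in>{..<n}. Re (\<Sum>k\<in>E. c k * ee (real j * real k / real n)) > 0} \<le> n"
proof (rule ccontr)
  define P where "P j = (\<Sum>k\<in>E. c k * ee (real j * real k / real n))" for j
  define J where "J = {j\<in>{..<n}. Re (P j) > 0}"
  assume "\<not> ?thesis"
  hence big: "card S + card J > n" by (simp add: J_def P_def)
  have Sn: "S \<subseteq> {..<n}" and Sindep: "\<And>u v. u \<in> S \<Longrightarrow> v \<in> S \<Longrightarrow> \<not> circ_adj n E u v"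
    using S by (auto simp: circ_indep_def)
  have finS: "finite S" using Sn finite_subset by blast
  define R where "R = {..<n} - S"
  have cardR: "card R = n - card S" using Sn finS by (simp add: R_def card_Diff_subset)
  have finJ: "finite J" by (simp add: J_def)
  have "card R < card J" using big cardR card_mono[OF _ Sn] by force
  then obtain b where b: "\<exists>j\<in>J. b j \<noteq> 0"
    "\<forall>u\<in>R. (\<Sum>j\<in>J. ee (-(real j * real u / real n)) * b j) = 0"
    using homog_system_nontrivial[of R J "\<lambda>u j. ee (-(real j * real u / real n))"] finJ
    by (auto simp: R_def)
  define w where "w u = (\<Sum>i\<in>J. b i * ee (-(real i * real u / real n)))" for u
  have w0: "w u = 0" if "u < n" "u \<notin> S" for u
    using b(2) that by (auto simp: w_def R_def mult.commute)
  define W where "W j = (\<Sum>v<n. w v * ee (real j * real v / real n))" for j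
  have WJ: "W j = (if j \<in> J then of_nat n * b j else 0)" if "j < n" for j
  proof -
    have "W j = (\<Sum>i\<in>J. b i * (\<Sum>v<n. ee (real v * of_int (int j - int i) / real n)))"
      unfolding W_def w_def sum_distrib_left sum_distrib_right
      by (subst sum.swap) (intro sum.cong refl, simp add: mult.assoc ee_add[symmetric] algebra_simps diff_divide_distrib)
    also have "\<dots> = (\<Sum>i\<in>J. b i * (if i = j then of_nat n else 0))"
    proof (intro sum.cong refl)
      fix i assume "i \<in> J"
      then have "i < n" by (simp add: J_def)
      have "int n dvd (int j - int i) \<longleftrightarrow> i = j"
      proof
        assume "int n dvd (int j - int i)"
        then obtain q where q: "int j - int i = int n * q" by auto
        have "q = 0"
        proof (rule ccontr)
          assume "q \<noteq> 0"
          then have "\<bar>int n * q\<bar> \<ge> int n" by (simp add: abs_mult) (metis abs_ge_zero abs_mult abs_of_nat mult_le_cancel_left1 not_less zero_less_abs_iff int_one_le_iff_zero_less)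
          then show False using q \<open>i < n\<close> \<open>j < n\<close> by linarith
        qed
        then show "i = j" using q by simp
      qed simp
      then show "b i * (\<Sum>v<n. ee (real v * of_int (int j - int i) / real n)) = b i * (if i = j then of_nat n else 0)"
        using ortho[OF n, of "int j - int i"] by simp
    qed
    also have "\<dots> = (if j \<in> J then of_nat n * b j else 0)"
      by (simp add: mult.commute if_distrib sum.delta' finJ cong: if_cong)
    finally show ?thesis .
  qed
  define \<mu> where "\<mu> j = P j + cnj (P j)" for j
  define Q where "Q = (\<Sum>j<n. \<mu> j * cnj (W j) * W j)"
  have "Q = (\<Sum>j\<in>J. \<mu> j * (of_nat n)\<^sup>2 * (cnj (b j) * b j))"
  proof -
    have "Q = (\<Sum>j<n. if j \<in> J then \<mu> j * (of_nat n)\<^sup>2 * (cnj (b j) * b j) else 0)"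
      unfolding Q_def by (intro sum.cong refl) (simp add: WJ power2_eq_square)
    also have "\<dots> = (\<Sum>j\<in>J. \<mu> j * (of_nat n)\<^sup>2 * (cnj (b j) * b j))"
      by (simp add: sum.If_cases J_def Int_def)
    finally show ?thesis .
  qed
  also have "\<dots> = of_real (\<Sum>j\<in>J. 2 * Re (P j) * (real n)\<^sup>2 * (cmod (b j))\<^sup>2)"
  proof -
    have pt: "\<mu> j * (of_nat n)\<^sup>2 * (cnj (b j) * b j) = of_real (2 * Re (P j) * (real n)\<^sup>2 * (cmod (b j))\<^sup>2)" for j
      by (simp add: \<mu>_def complex_add_cnj mult_ac) (metis complex_norm_square of_real_power)
    show ?thesis unfolding of_real_sum by (intro sum.cong refl pt)
  qed
  finally have Qre: "Re Q = (\<Sum>j\<in>J. 2 * Re (P j) * (real n)\<^sup>2 * (cmod (b j))\<^sup>2)" by simp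
  have "Re Q > 0"
  proof -
    from b(1) obtain j0 where j0: "j0 \<in> J" "b j0 \<noteq> 0" by auto
    have "0 < 2 * Re (P j0) * (real n)\<^sup>2 * (cmod (b j0))\<^sup>2"
      using j0 n by (simp add: J_def)
    also have "\<dots> \<le> (\<Sum>j\<in>J. 2 * Re (P j) * (real n)\<^sup>2 * (cmod (b j))\<^sup>2)"
      by (rule member_le_sum) (use j0 finJ in \<open>auto simp: J_def\<close>)
    finally show ?thesis using Qre by simp
  qed
  moreover have "Q = 0"
  proof -
    have Kzero: "(\<Sum>j<n. \<mu> j * ee (real j * (real v - real u) / real n)) = 0"
      if uv: "u \<in> S" "v \<in> S" for u v
    proof -
      have mu: "\<mu> j = (\<Sum>k\<in>E. c k * ee (real j * real k / real n) + cnj (c k) * ee (-(real j * real k / real n)))" for j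
        by (simp add: \<mu>_def P_def ee_cnj sum.distrib)
      have e1: "ee (real j * real k / real n) * ee (real j * (real v - real u) / real n)
          = ee (real j * of_int (int k + int v - int u) / real n)" for j k
        by (subst ee_add[symmetric], rule arg_cong[where f=ee]) (use n in \<open>simp add: field_simps\<close>)
      have e2: "ee (-(real j * real k / real n)) * ee (real j * (real v - real u) / real n)
          = ee (real j * of_int (int v - int u - int k) / real n)" for j k
        by (subst ee_add[symmetric], rule arg_cong[where f=ee]) (use n in \<open>simp add: field_simps\<close>)
      have "(\<Sum>j<n. \<mu> j * ee (real j * (real v - real u) / real n))
          = (\<Sum>j<n. \<Sum>k\<in>E. c k * ee (real j * of_int (int k + int v - int u) / real n)
               + cnj (c k) * ee (real j * of_int (int v - int u - int k) / real n))"
        unfolding mu sum_distrib_right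
        by (intro sum.cong refl) (simp add: distrib_right mult.assoc e1 e2)
      also have "\<dots> = (\<Sum>k\<in>E. c k * (\<Sum>j<n. ee (real j * of_int (int k + int v - int u) / real n))
               + cnj (c k) * (\<Sum>j<n. ee (real j * of_int (int v - int u - int k) / real n)))"
        by (subst sum.swap) (simp add: sum.distrib sum_distrib_left)
      also have "\<dots> = 0"
      proof (intro sum.neutral ballI)
        fix k assume k: "k \<in> E"
        have na: "\<not> circ_adj n E u v" using Sindep uv by auto
        have "\<not> int n dvd (int k + int v - int u)"
        proof
          assume "int n dvd (int k + int v - int u)"
          then have "int n dvd ((int u - int v) - int k)"
            by (metis dvd_minus_iff minus_diff_eq diff_diff_eq2 add.commute diff_add_eq)
          then have "(int u - int v) mod int n = int k mod int n" by (simp add: mod_eq_dvd_iff)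
          then show False using na k by (auto simp: circ_adj_def)
        qed
        moreover have "\<not> int n dvd (int v - int u - int k)"
        proof
          assume "int n dvd (int v - int u - int k)"
          then have "(int v - int u) mod int n = int k mod int n" by (simp add: mod_eq_dvd_iff)
          then show False using na k by (auto simp: circ_adj_def)
        qed
        ultimately show "c k * (\<Sum>j<n. ee (real j * of_int (int k + int v - int u) / real n))
               + cnj (c k) * (\<Sum>j<n. ee (real j * of_int (int v - int u - int k) / real n)) = 0"
          by (simp only: ortho[OF n]) simp
      qed
      finally show ?thesis .
    qed
    have pt: "\<mu> j * cnj (W j) * W j = (\<Sum>u<n. \<Sum>v<n. cnj (w u) * w v * (\<mu> j * ee (real j * (real v - real u) / real n)))" for j
    proof -
      have e3: "ee (real j * (real v - real u) / real n) = ee (- (real j * real u / real n)) * ee (real j * real v / real n)" for u v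
        by (subst ee_add[symmetric], rule arg_cong[where f=ee]) (use n in \<open>simp add: field_simps\<close>)
      have "cnj (W j) * W j = (\<Sum>u<n. cnj (w u) * ee (- (real j * real u / real n))) * (\<Sum>v<n. w v * ee (real j * real v / real n))"
        by (simp add: W_def ee_cnj)
      also have "\<dots> = (\<Sum>u<n. \<Sum>v<n. cnj (w u) * w v * ee (real j * (real v - real u) / real n))"
        unfolding sum_product
        by (intro sum.cong refl) (simp only: e3 mult_ac)
      finally have "\<mu> j * (cnj (W j) * W j) = \<mu> j * (\<Sum>u<n. \<Sum>v<n. cnj (w u) * w v * ee (real j * (real v - real u) / real n))"
        by simp
      then show ?thesis by (simp add: sum_distrib_left mult_ac)
    qed
    have "Q = (\<Sum>j<n. \<Sum>u<n. \<Sum>v<n. cnj (w u) * w v * (\<mu> j * ee (real j * (real v - real u) / real n)))"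
      unfolding Q_def pt ..
    also have "\<dots> = (\<Sum>u<n. \<Sum>j<n. \<Sum>v<n. cnj (w u) * w v * (\<mu> j * ee (real j * (real v - real u) / real n)))"
      by (rule sum.swap)
    also have "\<dots> = (\<Sum>u<n. \<Sum>v<n. \<Sum>j<n. cnj (w u) * w v * (\<mu> j * ee (real j * (real v - real u) / real n)))"
      by (rule sum.cong[OF refl], rule sum.swap)
    also have "\<dots> = (\<Sum>u<n. \<Sum>v<n. cnj (w u) * w v * (\<Sum>j<n. \<mu> j * ee (real j * (real v - real u) / real n)))"
      by (simp add: sum_distrib_left)
    also have "\<dots> = 0"
    proof (intro sum.neutral ballI)
      fix u v assume "u \<in> {..<n}" "v \<in> {..<n}"
      then show "cnj (w u) * w v * (\<Sum>j<n. \<mu> j * ee (real j * (real v - real u) / real n)) = 0"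
        using w0[of u] w0[of v] Kzero[of u v] by (cases "u \<in> S"; cases "v \<in> S") auto
    qed
    finally show ?thesis .
  qed
  ultimately show False by simp
qed

lemma circ_alpha_fin: "finite {card S | S. circ_indep n E S}"
proof -
  have "{card S | S. circ_indep n E S} \<subseteq> card ` Pow {..<n}"
    by (auto simp: circ_indep_def)
  then show ?thesis by (rule finite_subset) auto
qed

lemma circ_indep_empty: "circ_indep n E {}"
  by (simp add: circ_indep_def)

lemma circ_alpha_ge: "circ_indep n E S \<Longrightarrow> card S \<le> circ_alpha n E"
  unfolding circ_alpha_def by (rule Max_ge[OF circ_alpha_fin]) auto

lemma circ_alpha_ex: "\<exists>S. circ_indep n E S \<and> card S = circ_alpha n E"
proof -
  have "circ_alpha n E \<in> {card S | S. circ_indep n E S}"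
    unfolding circ_alpha_def using circ_alpha_fin circ_indep_empty[of n E] by (intro Max_in) auto
  then show ?thesis by auto
qed

definition free :: "nat set \<Rightarrow> nat set \<Rightarrow> bool" where
  "free E A \<longleftrightarrow> (\<forall>u\<in>A. \<forall>v\<in>A. \<forall>d\<in>E. u \<noteq> v + d)"

definition beta :: "nat set \<Rightarrow> nat \<Rightarrow> nat" where
  "beta E L = Max {card A | A. A \<subseteq> {..<L} \<and> free E A}"

lemma beta_fin: "finite {card A | A. A \<subseteq> {..<L} \<and> free E A}"
proof -
  have "{card A | A. A \<subseteq> {..<L} \<and> free E A} \<subseteq> card ` Pow {..<L}" by auto
  then show ?thesis by (rule finite_subset) auto
qed

lemma beta_ge: "A \<subseteq> {..<L} \<Longrightarrow> free E A \<Longrightarrow> card A \<le> beta E L"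
  unfolding beta_def by (rule Max_ge[OF beta_fin]) auto

lemma beta_ex: "\<exists>A. A \<subseteq> {..<L} \<and> free E A \<and> card A = beta E L"
proof -
  have "beta E L \<in> {card A | A. A \<subseteq> {..<L} \<and> free E A}"
    unfolding beta_def using beta_fin by (intro Max_in) (auto intro!: exI[of _ "{}"] simp: free_def)
  then show ?thesis by auto
qed

lemma beta_le: "beta E L \<le> L"
proof -
  obtain A where "A \<subseteq> {..<L}" "card A = beta E L" using beta_ex by blast
  then show ?thesis using card_mono[of "{..<L}" A] by simp
qed

lemma beta_mono: "L \<le> L' \<Longrightarrow> beta E L \<le> beta E L'"
proof -
  assume "L \<le> L'"
  obtain A where A: "A \<subseteq> {..<L}" "free E A" "card A = beta E L" using beta_ex by blast
  then have "A \<subseteq> {..<L'}" using \<open>L \<le> L'\<close> by auto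
  then show ?thesis using beta_ge[of A L' E] A by simp
qed

lemma circ_alpha_le_beta: "circ_alpha n E \<le> beta E n"
proof -
  obtain S where S: "circ_indep n E S" "card S = circ_alpha n E" using circ_alpha_ex by blast
  have "free E S"
    unfolding free_def
  proof (intro ballI notI)
    fix u v d assume "u \<in> S" "v \<in> S" "d \<in> E" "u = v + d"
    then have "circ_adj n E u v" unfolding circ_adj_def by (intro bexI[of _ d]) auto
    then show False using S \<open>u \<in> S\<close> \<open>v \<in> S\<close> by (auto simp: circ_indep_def)
  qed
  then show ?thesis using S beta_ge[of S n E] by (auto simp: circ_indep_def)
qed

lemma beta_subadd: "beta E (a + b) \<le> beta E a + beta E b"
proof -
  obtain A where A: "A \<subseteq> {..<a+b}" "free E A" "card A = beta E (a+b)" using beta_ex by blast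
  define A1 where "A1 = A \<inter> {..<a}"
  define A2 where "A2 = (\<lambda>x. x - a) ` (A \<inter> {a..})"
  have finA: "finite A" using A(1) finite_subset by blast
  have "A = A1 \<union> (A \<inter> {a..})" by (auto simp: A1_def)
  moreover have "A1 \<inter> (A \<inter> {a..}) = {}" by (auto simp: A1_def)
  ultimately have "card A = card A1 + card (A \<inter> {a..})"
    using finA card_Un_disjoint[of A1 "A \<inter> {a..}"] by (metis finite_Int finite_Un)
  moreover have "card A2 = card (A \<inter> {a..})"
    unfolding A2_def by (rule card_image) (auto simp: inj_on_def)
  moreover have "card A1 \<le> beta E a"
    using A by (intro beta_ge) (auto simp: A1_def free_def)
  moreover have "card A2 \<le> beta E b"
  proof (rule beta_ge)
    show "A2 \<subseteq> {..<b}" using A(1) by (auto simp: A2_def)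
    show "free E A2" unfolding free_def A2_def
    proof (clarify)
      fix u v d assume uv: "u \<in> A" "a \<le> u" "v \<in> A" "a \<le> v" "d \<in> E" "u - a = v - a + d"
      then have "u = v + d" by arith
      then show False using A(2) uv unfolding free_def by blast
    qed
  qed
  ultimately show ?thesis using A by linarith
qed

lemma beta_mult: "beta E (k * L) \<le> k * beta E L"
proof (induction k)
  case 0 then show ?case using beta_le[of E 0] by simp
next
  case (Suc k)
  have "beta E (Suc k * L) = beta E (L + k * L)" by simp
  also have "\<dots> \<le> beta E L + beta E (k * L)" by (rule beta_subadd)
  finally show ?case using Suc by simp
qed

lemma beta_upper: "L \<ge> 1 \<Longrightarrow> beta E n \<le> (n div L + 1) * beta E L"
proof -
  assume L: "L \<ge> 1"
  have "n mod L < L" using L by simp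
  moreover have "n div L * L + n mod L = n" by simp
  moreover have "(n div L + 1) * L = n div L * L + L" by simp
  ultimately have "n \<le> (n div L + 1) * L" by linarith
  then have "beta E n \<le> beta E ((n div L + 1) * L)" by (rule beta_mono)
  also have "\<dots> \<le> (n div L + 1) * beta E L" by (rule beta_mult)
  finally show ?thesis .
qed

lemma int_mod_cases:
  fixes x d n :: int
  assumes "x mod n = d" "- n < x" "x < n" "0 \<le> d" "d < n"
  shows "x = d \<or> x = d - n"
proof (cases "x \<ge> 0")
  case True
  then have "x mod n = x" using assms by (simp add: mod_pos_pos_trivial)
  then show ?thesis using assms by simp
next
  case False
  have "(x + n) mod n = x mod n" by simp
  moreover have "(x + n) mod n = x + n" using False assms by (intro mod_pos_pos_trivial) auto
  ultimately show ?thesis using assms by simp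
qed

lemma circ_alpha_lower:
  assumes E: "E \<subseteq> {1..N}" and L: "L \<ge> 1"
  shows "(n div (L+N)) * beta E L \<le> circ_alpha n E"
proof -
  define P where "P = L + N"
  define q where "q = n div P"
  obtain A where A: "A \<subseteq> {..<L}" "free E A" "card A = beta E L" using beta_ex by blast
  define g where "g = (\<lambda>(i::nat, a::nat). i * P + a)"
  define S where "S = g ` ({..<q} \<times> A)"
  have qP: "q * P \<le> n" by (simp add: q_def)
  have Pg: "P \<ge> L" "P > N" using L by (auto simp: P_def)
  have inj: "inj_on g ({..<q} \<times> A)"
  proof (rule inj_onI, clarify)
    fix i a i' a' assume "i < q" "a \<in> A" "i' < q" "a' \<in> A" "g (i, a) = g (i', a')"
    then have eq: "i * P + a = i' * P + a'" and "a < P" "a' < P" using A Pg by (auto simp: g_def)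
    then have "(i * P + a) div P = i" "(i' * P + a') div P = i'"
      by (metis add.commute add_cancel_right_left div_less div_mult_self1 not_less_zero)+
    then have "i = i'" using eq by simp
    then show "i = i' \<and> a = a'" using eq by simp
  qed
  have finA: "finite A" using A(1) finite_subset by blast
  have cardS: "card S = q * beta E L"
    unfolding S_def using card_image[OF inj] A(3) finA by (simp add: card_cartesian_product)
  have Sn: "S \<subseteq> {..<n}"
  proof
    fix u assume "u \<in> S"
    then obtain i a where ia: "i < q" "a \<in> A" "u = i * P + a" by (auto simp: S_def g_def)
    have "Suc i * P \<le> q * P" using ia by (intro mult_le_mono1) simp
    then show "u \<in> {..<n}" using ia A(1) Pg qP by auto
  qed
  have key: "(int u - int v) mod int n \<noteq> int d mod int n" if uv: "u \<in> S" "v \<in> S" and d: "d \<in> E" for u v d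
  proof
    assume m: "(int u - int v) mod int n = int d mod int n"
    obtain i a where ia: "i < q" "a \<in> A" "u = i * P + a" using uv by (auto simp: S_def g_def)
    obtain i' a' where ia': "i' < q" "a' \<in> A" "v = i' * P + a'" using uv by (auto simp: S_def g_def)
    have d1: "1 \<le> d" "d \<le> N" using d E by auto
    have "q \<ge> 1" using ia by simp
    then have "P \<le> q * P" by simp
    then have nP: "n \<ge> P" using qP by linarith
    have un: "u < n" "v < n" using Sn uv by auto
    have "int d mod int n = int d" using d1 nP Pg by (intro mod_pos_pos_trivial) auto
    then have "int u - int v = int d \<or> int u - int v = int d - int n"
      using int_mod_cases[of "int u - int v" "int n" "int d"] m un d1 nP Pg by auto
    then show False
    proof
      assume "int u - int v = int d"
      then have x: "u = v + d" by linarith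
      consider "i = i'" | "i' < i" | "i < i'" by linarith
      then show False
      proof cases
        case 1
        then have "a = a' + d" using x ia ia' by simp
        then show False using A(2) ia ia' d unfolding free_def by blast
      next
        case 2
        then have "Suc i' * P \<le> i * P" by (intro mult_le_mono1) simp
        then have "P + i' * P \<le> i * P" by simp
        moreover have "a' < L" using ia' A(1) by auto
        ultimately show False using x ia(3) ia'(3) d1 P_def by linarith
      next
        case 3
        then have "Suc i * P \<le> i' * P" by (intro mult_le_mono1) simp
        then have "P + i * P \<le> i' * P" by simp
        moreover have "a < L" using ia A(1) by auto
        ultimately show False using x ia(3) ia'(3) d1 Pg by linarith
      qed
    next
      assume "int u - int v = int d - int n"
      then have x: "u + n = v + d" by linarith
      have "i' \<le> q - 1" using ia' by simp
      then have "i' * P \<le> (q - 1) * P" by (rule mult_le_mono1)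
      also have "\<dots> = q * P - P" by (simp add: diff_mult_distrib)
      finally have "i' * P + P \<le> q * P" using \<open>P \<le> q * P\<close> by linarith
      moreover have "a' < L" using ia' A(1) by auto
      ultimately show False using x ia(3) ia'(3) d1 qP P_def by linarith
    qed
  qed
  have "circ_indep n E S"
    unfolding circ_indep_def circ_adj_def using Sn key by blast
  then have "card S \<le> circ_alpha n E" by (rule circ_alpha_ge)
  then show ?thesis using cardS by (simp add: q_def P_def)
qed

lemma real_div_lower: "P > 0 \<Longrightarrow> real n / real P - 1 \<le> real (n div P)"
proof -
  assume P: "P > 0"
  have "n = n div P * P + n mod P" by simp
  then have "real n = real (n div P) * real P + real (n mod P)" by (metis of_nat_add of_nat_mult)
  moreover have "real (n mod P) < real P" using P by simp
  ultimately have "real n < (real (n div P) + 1) * real P" by (simp add: algebra_simps)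
  then show ?thesis using P by (simp add: field_simps)
qed

lemma alpha_conv:
  assumes E: "E \<subseteq> {1..N}"
  shows "(\<lambda>n. real (circ_alpha n E) / real n) \<longlonglongrightarrow> Inf ((\<lambda>L. real (beta E L) / real L) ` {1..})"
proof (rule LIMSEQ_I)
  define B where "B = (\<lambda>L. real (beta E L) / real L) ` {1..}"
  define bs where "bs = Inf B"
  have Bne: "B \<noteq> {}" by (auto simp: B_def)
  have Bbdd: "bdd_below B" unfolding B_def by (intro bdd_belowI[of _ 0]) auto
  have bsL: "bs \<le> real (beta E L) / real L" if "L \<ge> 1" for L
    unfolding bs_def using Bbdd that by (intro cInf_lower) (auto simp: B_def)
  have bs0: "bs \<ge> 0" unfolding bs_def using Bne by (intro cInf_greatest) (auto simp: B_def)
  have bs1: "bs \<le> 1" using bsL[of 1] beta_le[of E 1] by simp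
  have bsL': "bs * real L \<le> real (beta E L)" if "L \<ge> 1" for L
    using bsL[OF that] that by (simp add: field_simps)
  fix r :: real assume r: "r > 0"
  define \<epsilon> where "\<epsilon> = r / 3"
  have \<epsilon>: "\<epsilon> > 0" using r by (simp add: \<epsilon>_def)
  obtain L1 where L1: "L1 \<ge> 1" "real (beta E L1) / real L1 < bs + \<epsilon>"
  proof -
    have "Inf B < bs + \<epsilon>" using \<epsilon> by (simp add: bs_def)
    from cInf_lessD[OF Bne this] show ?thesis using that by (auto simp: B_def)
  qed
  define L2 where "L2 = nat \<lceil>real N / \<epsilon>\<rceil> + 1"
  have L2: "L2 \<ge> 1" by (simp add: L2_def)
  have "real N / \<epsilon> < real L2" unfolding L2_def by linarith
  then have L2e: "real N < \<epsilon> * real L2" using \<epsilon> by (simp add: field_simps)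
  define P where "P = L2 + N"
  have P: "P > 0" "real P = real L2 + real N" using L2 by (auto simp: P_def)
  have NP: "real N / real P < \<epsilon>"
  proof -
    have "0 \<le> \<epsilon> * real N" using \<epsilon> by simp
    moreover have "\<epsilon> * real P = \<epsilon> * real L2 + \<epsilon> * real N" using P(2) by (simp add: distrib_left)
    ultimately have "real N < \<epsilon> * real P" using L2e by linarith
    then show ?thesis using P by (simp add: field_simps)
  qed
  define no where "no = nat \<lceil>(real L1 + real L2) / \<epsilon>\<rceil> + 1"
  show "\<exists>no. \<forall>n\<ge>no. norm (real (circ_alpha n E) / real n - Inf ((\<lambda>L. real (beta E L) / real L) ` {1..})) < r"
  proof (intro exI[of _ no] allI impI)
    fix n assume n: "n \<ge> no"
    have "(real L1 + real L2) / \<epsilon> < real no" unfolding no_def by linarith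
    also have "\<dots> \<le> real n" using n by simp
    finally have "real L1 + real L2 < \<epsilon> * real n" using \<epsilon> by (simp add: field_simps)
    then have lt: "real L1 < \<epsilon> * real n" "real L2 < \<epsilon> * real n" using L1(1) L2 by auto
    have npos: "real n > 0"
    proof (rule ccontr)
      assume "\<not> real n > 0" then have "n = 0" by simp
      then show False using lt by simp
    qed
    have n1: "real L1 / real n < \<epsilon>" "real L2 / real n < \<epsilon>"
      using lt npos by (simp_all add: field_simps)
    define x where "x = real (circ_alpha n E) / real n"
    have "circ_alpha n E \<le> (n div L1 + 1) * beta E L1"
      using circ_alpha_le_beta[of n E] beta_upper[OF L1(1), of E n] by linarith
    then have "real (circ_alpha n E) \<le> (real (n div L1) + 1) * real (beta E L1)"
      by (metis of_nat_1 of_nat_add of_nat_le_iff of_nat_mult)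
    also have "\<dots> \<le> (real n / real L1 + 1) * real (beta E L1)"
      by (intro mult_right_mono) (auto simp: of_nat_div_le_of_nat)
    finally have "x \<le> (real n / real L1 + 1) * real (beta E L1) / real n"
      unfolding x_def using npos by (simp add: divide_right_mono)
    also have "\<dots> = real (beta E L1) / real L1 + real (beta E L1) / real n"
      using npos L1(1) by (simp add: field_simps)
    also have "real (beta E L1) / real n \<le> real L1 / real n"
      using beta_le[of E L1] npos by (simp add: divide_right_mono)
    finally have up: "x < bs + 2 * \<epsilon>" using L1(2) n1 by linarith
    have "n div P * beta E L2 \<le> circ_alpha n E"
      using circ_alpha_lower[OF E L2, of n] by (simp add: P_def)
    then have "real (n div P) * real (beta E L2) \<le> real (circ_alpha n E)"
      by (metis of_nat_le_iff of_nat_mult)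
    moreover have "real (n div P) * (bs * real L2) \<le> real (n div P) * real (beta E L2)"
      using bsL'[OF L2] by (intro mult_left_mono) auto
    moreover have "(real n / real P - 1) * (bs * real L2) \<le> real (n div P) * (bs * real L2)"
      using real_div_lower[OF P(1), of n] bs0 by (intro mult_right_mono) auto
    ultimately have "(real n / real P - 1) * (bs * real L2) \<le> real (circ_alpha n E)" by linarith
    then have "(real n / real P - 1) * (bs * real L2) / real n \<le> x"
      unfolding x_def using npos by (simp add: divide_right_mono)
    moreover have "(real n / real P - 1) * (bs * real L2) / real n = bs * real L2 / real P - bs * real L2 / real n"
      using npos P by (simp add: field_simps)
    moreover have "bs * real L2 / real P = bs - bs * (real N / real P)"
      using P by (simp add: field_simps)
    moreover have "bs * (real N / real P) \<le> real N / real P"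
      using bs1 bs0 by (intro mult_left_le_one_le) auto
    moreover have "bs * real L2 / real n \<le> real L2 / real n"
      using bs1 bs0 npos by (intro divide_right_mono mult_left_le_one_le) auto
    ultimately have low: "x > bs - 2 * \<epsilon>" using NP n1 by linarith
    show "norm (real (circ_alpha n E) / real n - Inf ((\<lambda>L. real (beta E L) / real L) ` {1..})) < r"
      using up low unfolding x_def[symmetric] bs_def[symmetric] B_def[symmetric] \<epsilon>_def by auto
  qed
qed

lemma alpha_fin_conv:
  assumes E: "E \<subseteq> {1..N}"
  shows "(\<lambda>n. real (circ_alpha n E) / real n) \<longlonglongrightarrow> alpha_fin E"
  using alpha_conv[OF E] unfolding alpha_fin_def by (metis limI)

lemma alpha_fin_nonneg:
  assumes E: "E \<subseteq> {1..N}"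
  shows "alpha_fin E \<ge> 0"
  using alpha_fin_conv[OF E] by (rule LIMSEQ_le_const) auto

lemma alpha_fin_le:
  assumes E: "E \<subseteq> {1..N}" and b: "\<And>n. n \<ge> 1 \<Longrightarrow> real (circ_alpha n E) / real n \<le> c"
  shows "alpha_fin E \<le> c"
  using alpha_fin_conv[OF E] by (rule LIMSEQ_le_const2) (use b in auto)

lemma closed_shift: "closed (G::real set) \<Longrightarrow> closed {t. t + c \<in> G}"
proof -
  assume G: "closed G"
  have "{t. t + c \<in> G} = (\<lambda>t. t + c) -` G" by auto
  also have "closed \<dots>" using G by (intro continuous_closed_vimage) (auto intro!: continuous_intros)
  finally show ?thesis .
qed

lemma sum_indicator_card: "(\<Sum>j\<in>S. indicator (A j) t :: real) = real (card {j\<in>S. t \<in> A j})" if "finite S"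
  using that by (simp add: indicator_def sum.If_cases Int_def conj_commute)

lemma avg_bound:
  fixes G :: "real set"
  assumes G: "closed G" and n: "n \<ge> 1"
    and cnt: "\<And>t. \<alpha> \<le> card {j\<in>{..<n}. t + real j / real n \<in> G}"
  shows "real \<alpha> / real n \<le> measure lebesgue ({0..1} \<inter> G)"
proof -
  have npos: "real n > 0" using n by simp
  define I where "I = {0..<1 / real n}"
  define A where "A j = I \<inter> {t. t + real j / real n \<in> G}" for j
  define B where "B j = {real j / real n..<(real j + 1) / real n} \<inter> G" for j
  have Ameas: "A j \<in> sets lebesgue" for j
    unfolding A_def I_def using closed_shift[OF G] by (intro sets.Int) auto
  have Afin: "emeasure lebesgue (A j) < \<infinity>" for j
  proof -
    have "emeasure lebesgue (A j) \<le> emeasure lebesgue I"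
      by (rule emeasure_mono) (auto simp: A_def I_def)
    also have "\<dots> < \<infinity>" using npos by (simp add: I_def)
    finally show ?thesis .
  qed
  have Iint: "integrable lebesgue (indicator I :: real \<Rightarrow> real)"
    using npos by (intro integrable_real_indicator) (auto simp: I_def)
  have pw: "real \<alpha> * indicator I t \<le> (\<Sum>j<n. indicator (A j) t)" for t
  proof (cases "t \<in> I")
    case True
    then have "(\<Sum>j<n. indicator (A j) t :: real) = real (card {j\<in>{..<n}. t + real j / real n \<in> G})"
      by (subst sum_indicator_card) (auto simp: A_def)
    then show ?thesis using True cnt[of t] by simp
  next
    case False
    then show ?thesis by (simp add: sum_nonneg)
  qed
  have "real \<alpha> * measure lebesgue I = integral\<^sup>L lebesgue (\<lambda>t. real \<alpha> * indicator I t)"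
    by simp
  also have "\<dots> \<le> integral\<^sup>L lebesgue (\<lambda>t. \<Sum>j<n. indicator (A j) t)"
    using Iint Ameas Afin pw by (intro integral_mono) auto
  also have "\<dots> = (\<Sum>j<n. integral\<^sup>L lebesgue (indicator (A j) :: real \<Rightarrow> real))"
    by (rule Bochner_Integration.integral_sum) (use Ameas Afin in auto)
  also have "\<dots> = (\<Sum>j<n. measure lebesgue (A j))"
    by simp
  also have "\<dots> = (\<Sum>j<n. measure lebesgue (B j))"
  proof (intro sum.cong refl)
    fix j
    have "(+) (real j / real n) ` A j = B j"
    proof (intro set_eqI iffI)
      fix x assume "x \<in> (+) (real j / real n) ` A j"
      then show "x \<in> B j" using npos
        by (auto simp: A_def B_def I_def add_divide_distrib add.commute)
    next
      fix x assume x: "x \<in> B j"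
      have "x - real j / real n \<in> A j" using x npos
        by (auto simp: A_def B_def I_def add_divide_distrib)
      then show "x \<in> (+) (real j / real n) ` A j" by (intro image_eqI[of _ _ "x - real j / real n"]) auto
    qed
    then show "measure lebesgue (A j) = measure lebesgue (B j)"
      using measure_translation[of "real j / real n" "A j"] by simp
  qed
  also have "\<dots> = measure lebesgue (\<Union>j<n. B j)"
  proof (rule measure_finite_Union[symmetric])
    show "B ` {..<n} \<subseteq> sets lebesgue" using G by (auto simp: B_def)
    show "emeasure lebesgue (B j) \<noteq> \<infinity>" for j
    proof -
      have "emeasure lebesgue (B j) \<le> emeasure lebesgue {real j / real n..<(real j + 1) / real n}"
        by (rule emeasure_mono) (auto simp: B_def)
      also have "\<dots> < \<infinity>" using npos by (simp add: divide_right_mono)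
      finally show ?thesis by simp
    qed
    show "disjoint_family_on B {..<n}"
      unfolding disjoint_family_on_def
    proof (intro ballI impI)
      fix j j' :: nat assume "j \<noteq> j'"
      have *: "B j \<inter> B j' = {}" if "j < j'" for j j'
      proof -
        have "(real j + 1) / real n \<le> real j' / real n"
          using that npos by (intro divide_right_mono) auto
        then show ?thesis by (auto simp: B_def)
      qed
      show "B j \<inter> B j' = {}"
        using *[of j j'] *[of j' j] \<open>j \<noteq> j'\<close> by (cases "j < j'") (auto simp: Int_commute)
    qed
  qed simp
  also have "\<dots> \<le> measure lebesgue ({0..1} \<inter> G)"
  proof (rule measure_mono_fmeasurable)
    show "(\<Union>j<n. B j) \<subseteq> {0..1} \<inter> G"
    proof
      fix x assume "x \<in> (\<Union>j<n. B j)"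
      then obtain j where j: "j < n" "x \<in> B j" by auto
      have "(real j + 1) / real n \<le> 1" using j npos by (simp add: field_simps)
      moreover have "0 \<le> real j / real n" by simp
      moreover have "real j / real n \<le> x" "x < (real j + 1) / real n" "x \<in> G" using j by (auto simp: B_def)
      ultimately have "0 \<le> x" "x \<le> 1" "x \<in> G" by linarith+
      then show "x \<in> {0..1} \<inter> G" by auto
    qed
    show "(\<Union>j<n. B j) \<in> sets lebesgue" using G by (auto simp: B_def)
    show "{0..1} \<inter> G \<in> fmeasurable lebesgue"
      using G by (intro lmeasurable_compact) (simp add: compact_Int_closed)
  qed
  finally have "real \<alpha> * measure lebesgue I \<le> measure lebesgue ({0..1} \<inter> G)" .
  moreover have "measure lebesgue I = 1 / real n" using npos by (simp add: I_def)
  ultimately show ?thesis by simp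
qed

lemma cont_cis2: "continuous_on UNIV (\<lambda>s::real. cis (2 * pi * s))"
  by (auto intro!: continuous_intros simp: cis_conv_exp)

lemma poly_bound:
  fixes a :: "nat \<Rightarrow> complex"
  shows "alpha_fin ({k. k \<ge> 1 \<and> a k \<noteq> 0} \<inter> {1..N})
    \<le> measure lebesgue ({0..1} \<inter> {s. Re (\<Sum>k=1..N. a k * cis (2 * pi * s) ^ k) \<le> 0})"
proof -
  define E where "E = {k. k \<ge> 1 \<and> a k \<noteq> 0} \<inter> {1..N}"
  define G where "G = {s. Re (\<Sum>k=1..N. a k * cis (2 * pi * s) ^ k) \<le> 0}"
  have EN: "E \<subseteq> {1..N}" by (auto simp: E_def)
  have finE: "finite E" using EN finite_subset by blast
  have Gc: "closed G" unfolding G_def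
    by (intro closed_Collect_le continuous_on_const continuous_intros continuous_on_compose2[OF cont_cis2]) auto
  have p: "(\<Sum>k\<in>E. a k * ee (real k * x)) = (\<Sum>k=1..N. a k * cis (2 * pi * x) ^ k)" for x
  proof -
    have "(\<Sum>k\<in>E. a k * ee (real k * x)) = (\<Sum>k=1..N. a k * ee (real k * x))"
      by (rule sum.mono_neutral_left) (auto simp: E_def)
    also have "\<dots> = (\<Sum>k=1..N. a k * cis (2 * pi * x) ^ k)"
      by (simp only: ee_def[symmetric] ee_pow)
    finally show ?thesis .
  qed
  show ?thesis
    unfolding E_def[symmetric] G_def[symmetric]
  proof (rule alpha_fin_le[OF EN])
    fix n :: nat assume n: "n \<ge> 1"
    show "real (circ_alpha n E) / real n \<le> measure lebesgue ({0..1} \<inter> G)"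
    proof (rule avg_bound[OF Gc n])
      fix t :: real
      obtain S where S: "circ_indep n E S" "card S = circ_alpha n E" using circ_alpha_ex by blast
      define c where "c k = a k * ee (real k * t)" for k
      have cj: "(\<Sum>k\<in>E. c k * ee (real j * real k / real n)) = (\<Sum>k=1..N. a k * cis (2 * pi * (t + real j / real n)) ^ k)" for j
      proof -
        have "(\<Sum>k\<in>E. c k * ee (real j * real k / real n)) = (\<Sum>k\<in>E. a k * ee (real k * (t + real j / real n)))"
          by (intro sum.cong refl) (simp add: c_def mult.assoc ee_add[symmetric] algebra_simps)
        then show ?thesis using p by simp
      qed
      have "card S + card {j\<in>{..<n}. Re (\<Sum>k\<in>E. c k * ee (real j * real k / real n)) > 0} \<le> n"
        by (rule inertia[OF n finE S(1)])
      then have A: "card S + card {j\<in>{..<n}. \<not> (t + real j / real n \<in> G)} \<le> n"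
        by (simp add: cj G_def not_le)
      have U: "{j\<in>{..<n}. \<not> (t + real j / real n \<in> G)} \<union> {j\<in>{..<n}. t + real j / real n \<in> G} = {..<n}" by auto
      have "card {j\<in>{..<n}. \<not> (t + real j / real n \<in> G)} + card {j\<in>{..<n}. t + real j / real n \<in> G} = n"
      proof -
        have "card ({j\<in>{..<n}. \<not> (t + real j / real n \<in> G)} \<union> {j\<in>{..<n}. t + real j / real n \<in> G})
          = card {j\<in>{..<n}. \<not> (t + real j / real n \<in> G)} + card {j\<in>{..<n}. t + real j / real n \<in> G}"
          by (rule card_Un_disjoint) auto
        then show ?thesis unfolding U by simp
      qed
      then show "circ_alpha n E \<le> card {j\<in>{..<n}. t + real j / real n \<in> G}"
        using A S(2) by linarith
    qed
  qed
qed

lemma main_neg: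
  fixes a :: "nat \<Rightarrow> complex" and f :: "complex \<Rightarrow> complex"
  assumes unif: "uniform_limit (sphere 0 1) (\<lambda>n z. \<Sum>k=1..n. a k * z ^ k) f sequentially"
    and cont: "continuous_on (sphere 0 1) f"
  shows "alpha_set {k. k \<ge> 1 \<and> a k \<noteq> 0}
     \<le> circ_measure {z \<in> sphere 0 1. Re (f z) < 0} + circ_measure {z \<in> sphere 0 1. Re (f z) = 0}"
proof -
  define D where "D = {k. k \<ge> 1 \<and> a k \<noteq> 0}"
  define h where "h s = Re (f (cis (2 * pi * s)))" for s
  have cis_sph: "cis (2 * pi * s) \<in> sphere 0 1" for s by simp
  have hc: "continuous_on UNIV h"
  proof -
    have "continuous_on UNIV (\<lambda>s. f (cis (2 * pi * s)))"
      by (rule continuous_on_compose2[OF cont cont_cis2]) (auto simp: cis_sph)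
    then show ?thesis unfolding h_def by (intro continuous_intros)
  qed
  define H where "H \<epsilon> = {0..1} \<inter> {s. h s \<le> \<epsilon>}" for \<epsilon>
  have Hfm: "H \<epsilon> \<in> fmeasurable lebesgue" for \<epsilon>
    unfolding H_def
    by (intro lmeasurable_compact compact_Int_closed compact_Icc closed_Collect_le hc continuous_on_const)
  have bdd: "bdd_below ((\<lambda>n. alpha_fin (D \<inter> {1..n})) ` {1..})"
    by (intro bdd_belowI[of _ 0]) (auto intro: alpha_fin_nonneg[of _ n for n])
  have step: "alpha_set D \<le> measure lebesgue (H \<epsilon>)" if \<epsilon>: "\<epsilon> > 0" for \<epsilon>
  proof -
    from uniform_limitD[OF unif \<epsilon>] obtain M where
      M: "\<And>n. n \<ge> M \<Longrightarrow> \<forall>z\<in>sphere 0 1. dist (\<Sum>k=1..n. a k * z ^ k) (f z) < \<epsilon>"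
      by (auto simp: eventually_sequentially)
    define N where "N = max M 1"
    have N: "N \<ge> 1" "\<forall>z\<in>sphere 0 1. dist (\<Sum>k=1..N. a k * z ^ k) (f z) < \<epsilon>"
      using M[of N] by (auto simp: N_def)
    define G where "G = {s. Re (\<Sum>k=1..N. a k * cis (2 * pi * s) ^ k) \<le> 0}"
    have Gc: "closed G" unfolding G_def
      by (intro closed_Collect_le continuous_on_const continuous_intros continuous_on_compose2[OF cont_cis2]) auto
    have "alpha_set D \<le> alpha_fin (D \<inter> {1..N})"
      unfolding alpha_set_def by (rule cINF_lower[OF bdd]) (use N in auto)
    also have "\<dots> \<le> measure lebesgue ({0..1} \<inter> G)"
      unfolding D_def G_def by (rule poly_bound)
    also have "\<dots> \<le> measure lebesgue (H \<epsilon>)"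
    proof (rule measure_mono_fmeasurable[OF _ _ Hfm])
      show "{0..1} \<inter> G \<in> sets lebesgue" using Gc by auto
      show "{0..1} \<inter> G \<subseteq> H \<epsilon>"
      proof
        fix s assume s: "s \<in> {0..1} \<inter> G"
        define z where "z = cis (2 * pi * s)"
        define p where "p = (\<Sum>k=1..N. a k * z ^ k)"
        have "Re p \<le> 0" using s by (simp add: G_def p_def z_def)
        moreover have "dist p (f z) < \<epsilon>" using N(2) cis_sph[of s] by (simp add: p_def z_def)
        moreover have "Re (f z) - Re p \<le> dist p (f z)"
          using abs_Re_le_cmod[of "f z - p"] by (simp add: dist_norm norm_minus_commute)
        ultimately have "h s \<le> \<epsilon>" by (simp add: h_def z_def)
        then show "s \<in> H \<epsilon>" using s by (simp add: H_def)
      qed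
    qed
    finally show ?thesis .
  qed
  have dec: "decseq (\<lambda>m. H (1 / real (Suc m)))"
  proof (rule decseq_SucI)
    fix m
    have "1 / real (Suc (Suc m)) \<le> 1 / real (Suc m)" by (simp add: frac_le)
    then show "H (1 / real (Suc (Suc m))) \<subseteq> H (1 / real (Suc m))" by (auto simp: H_def)
  qed
  have lim: "(\<lambda>m. measure lebesgue (H (1 / real (Suc m)))) \<longlonglongrightarrow> measure lebesgue (\<Inter>m. H (1 / real (Suc m)))"
  proof (rule Lim_measure_decseq)
    show "range (\<lambda>m. H (1 / real (Suc m))) \<subseteq> sets lebesgue" using Hfm by auto
    show "decseq (\<lambda>m. H (1 / real (Suc m)))" by (rule dec)
    show "emeasure lebesgue (H (1 / real (Suc m))) \<noteq> \<infinity>" for m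
      using fmeasurableD2[OF Hfm] by simp
  qed
  have "(\<Inter>m. H (1 / real (Suc m))) = H 0"
  proof (intro set_eqI iffI)
    fix s assume s: "s \<in> (\<Inter>m. H (1 / real (Suc m)))"
    have "h s \<le> 0"
    proof (rule ccontr)
      assume "\<not> h s \<le> 0"
      then have "h s > 0" by simp
      then obtain m where "inverse (real (Suc m)) < h s" using reals_Archimedean by blast
      moreover have "h s \<le> 1 / real (Suc m)" using s by (auto simp: H_def)
      ultimately show False by (simp add: inverse_eq_divide)
    qed
    then show "s \<in> H 0" using s by (auto simp: H_def)
  next
    fix s assume "s \<in> H 0"
    then show "s \<in> (\<Inter>m. H (1 / real (Suc m)))" by (auto simp: H_def intro: order_trans[of _ 0])
  qed
  then have lim0: "(\<lambda>m. measure lebesgue (H (1 / real (Suc m)))) \<longlonglongrightarrow> measure lebesgue (H 0)"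
    using lim by simp
  have "alpha_set D \<le> measure lebesgue (H 0)"
    using lim0 by (rule LIMSEQ_le_const) (auto intro!: step)
  also have "H 0 = ({0..1} \<inter> {s. h s < 0}) \<union> ({0..1} \<inter> {s. h s = 0})"
    by (auto simp: H_def)
  also have "measure lebesgue \<dots> \<le> measure lebesgue ({0..1} \<inter> {s. h s < 0}) + measure lebesgue ({0..1} \<inter> {s. h s = 0})"
  proof (rule measure_Un_le)
    have "open {s. h s < 0}" by (intro open_Collect_less hc continuous_on_const)
    then show "{0..1} \<inter> {s. h s < 0} \<in> sets lebesgue" by auto
    have "closed {s. h s = 0}" by (intro closed_Collect_eq hc continuous_on_const)
    then show "{0..1} \<inter> {s. h s = 0} \<in> sets lebesgue" by auto
  qed
  also have "\<dots> = circ_measure {z \<in> sphere 0 1. Re (f z) < 0} + circ_measure {z \<in> sphere 0 1. Re (f z) = 0}"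
    unfolding circ_measure_def h_def
    by (intro arg_cong2[where f="(+)"] arg_cong[where f="measure lebesgue"]) (auto simp: cis_sph)
  finally show ?thesis unfolding D_def .
qed

theorem theorem5:
  fixes a :: "nat \<Rightarrow> complex" and f :: "complex \<Rightarrow> complex"
  assumes unif: "uniform_limit (sphere 0 1) (\<lambda>n z. \<Sum>k=1..n. a k * z ^ k) f sequentially"
    and cont: "continuous_on (sphere 0 1) f"
    and zero: "circ_measure {z \<in> sphere 0 1. Re (f z) = 0} = 0"
  shows "alpha_set {k. k \<ge> 1 \<and> a k \<noteq> 0} \<le> min (rho_plus f) (rho_minus f)"
proof -
  have neg: "alpha_set {k. k \<ge> 1 \<and> a k \<noteq> 0} \<le> rho_minus f"
    using main_neg[OF unif cont] zero by (simp add: rho_minus_def)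
  have unif': "uniform_limit (sphere 0 1) (\<lambda>n z. \<Sum>k=1..n. (- a k) * z ^ k) (\<lambda>z. - f z) sequentially"
  proof -
    have "uniform_limit (sphere 0 1) (\<lambda>n z. - (\<Sum>k=1..n. a k * z ^ k)) (\<lambda>z. - f z) sequentially"
      by (rule uniform_limit_uminus[OF unif])
    moreover have "(\<lambda>n z. - (\<Sum>k=1..n. a k * z ^ k)) = (\<lambda>n z. \<Sum>k=1..n. (- a k) * z ^ k)"
      by (simp add: sum_negf)
    ultimately show ?thesis by simp
  qed
  have cont': "continuous_on (sphere 0 1) (\<lambda>z. - f z)"
    using cont by (rule continuous_on_minus)
  have "alpha_set {k. k \<ge> 1 \<and> - a k \<noteq> 0} \<le> circ_measure {z \<in> sphere 0 1. Re (- f z) < 0} + circ_measure {z \<in> sphere 0 1. Re (- f z) = 0}"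
    by (rule main_neg[OF unif' cont'])
  then have pos: "alpha_set {k. k \<ge> 1 \<and> a k \<noteq> 0} \<le> rho_plus f"
    using zero by (simp add: rho_plus_def)
  show ?thesis using neg pos by simp
qed

end
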